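(* Let $n,m,n_f,\ell\in\mathbb{N}$, let $0\leq w<1$ be a number representable with $n$ bits of which the first $m$ are its integer part, and let $f\in[0,1]$ be given with $n_f$ bits after the binary point. Then the value $\hat{t}$ returned by Algorithm FractionalPower2$(w,f,n,m,n_f,\ell)$ (described in the context), which performs its final arithmetic with $b=\max\{n,n_f,\lceil 2\ell+6m+2\ln n_f\rceil,40\}$ bits after the binary point, satisfies $$|\hat{t}-w^f|\leq\frac{1}{2^{\ell-3}}.$$
   Context: Fixed precision representation: a number $w\ge 0$ "given by $n$ bits of which the first $m$ correspond to its integer part" means $w=\sum_{j=m-n}^{m-1} w^{(j)}2^j$ with $w^{(j)}\in\{0,1\}$. For $x\geq 0$, "truncating $x$ to $b$ bits after the binary point" means replacing $x$ by $\lfloor 2^b x\rfloor/2^b$. All arithmetic inside a step is performed exactly; only the stated truncations introduce error. For $c\ge 0$, $\{c\}=c-\lfloor c\rfloor$. Algorithm INV$(w,n,m,b)$ (input $w\ge1$): if $w=1$ return $1$. Otherwise let $p\in\mathbb{N}$ with $2^p>w\geq 2^{p-1}$, $\hat{x}_0=2^{-p}$, $s=\lceil\log_2 b\rceil$; for $i=1,\dots,s$ compute exactly $x_i=-w\hat{x}_{i-1}^2+2\hat{x}_{i-1}$ and let $\hat{x}_i$ be $x_i$ truncated to $b$ bits. Return $\hat{x}_s$. Algorithm SQRT$(w,n,m,b)$ (input $w\geq 1$): if $w=1$, return $1$. Otherwise compute $\hat{x}_s$ exactly as in the loop of INV$(w,n,m,b)$ (with $s=\lceil\log_2 b\rceil$);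 let $q\in\mathbb{N}$ with $2^{1-q}>\hat{x}_s\geq 2^{-q}$ and set $\hat{y}_0=2^{\lfloor (q-1)/2\rfloor}$; for $j=1,\dots,s$ compute exactly $y_j=\frac12(3\hat{y}_{j-1}-\hat{x}_s\hat{y}_{j-1}^3)$ and let $\hat{y}_j$ be $y_j$ truncated to $b$ bits. Return $\hat{y}_s$. Algorithm PowerOf2Roots$(w,k,n,m,b)$: set $\hat{z}_1=$ SQRT$(w,n,m,b)$; for $i=2,\dots,k$ set $\hat{z}_i=$ SQRT$(\hat{z}_{i-1},m+b,m,b)$. Return $\hat{z}_1,\dots,\hat{z}_k$. Algorithm FractionalPower$(w,f,n,m,n_f,\ell)$ (input $w\geq1$, $f=\sum_{i=1}^{n_f}f_i2^{-i}$ or $f=1$, bits $f_i\in\{0,1\}$): set $b=\max\{n,n_f,\lceil 5(\ell+2m+\ln n_f)\rceil,40\}$. If $f=1$ return $w$; if $f=0$ return $1$. Let $\hat{w}_1,\dots,\hat{w}_{n_f}$ be the outputs of PowerOf2Roots$(w,n_f,n,m,b)$. Set $\hat{z}=1$; for $i=1,\dots,n_f$, if $f_i=1$ replace $\hat{z}$ by $\hat{z}\hat{w}_i$ truncated to $b$ bits. Return $\hat{z}$. Algorithm FractionalPower2$(w,f,n,m,n_f,\ell)$ (input $0\le w<1$, $f\in[0,1]$ with $n_f$ fractional bits): set $b=\max\{n,n_f,\lceil 2\ell+6m+2\ln n_f\rceil,40\}$. If $w=0$ return $0$; if $f=1$ return $w$; if $f=0$ return $1$. Let $k$ be the positive integer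 with $2^kw\geq 1>2^{k-1}w$ and set $x=2^kw$ (exact shift). Set $c=kf$ (exact). Let $\hat{z}=$ FractionalPower$(x,f,n,m,n_f,\ell)$, $\hat{y}=$ FractionalPower$(2,\{c\},n,m,n_f,\ell)$, $\hat{s}=$ INV$(\hat{y},n,1,2\ell)$, $v=2^{-\lfloor c\rfloor}\hat{z}$ (exact shift), and let $\hat{t}$ be $v\hat{s}$ truncated to $b$ bits after the binary point. Return $\hat{t}$. *)

theory Defs
  imports "HOL-Analysis.Analysis"
begin

definition trunc_bits :: "nat \<Rightarrow> real \<Rightarrow> real" where
  "trunc_bits b x = real_of_int \<lfloor>2 ^ b * x\<rfloor> / 2 ^ b"

definition fixed_repr :: "nat \<Rightarrow> nat \<Rightarrow> real \<Rightarrow> bool" where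
  "fixed_repr n m w \<longleftrightarrow> (\<exists>d :: int \<Rightarrow> nat. (\<forall>j. d j \<in> {0, 1}) \<and>
      w = (\<Sum>j\<in>{int m - int n .. int m - 1}. real (d j) * 2 powr (real_of_int j)))"

definition frac_repr :: "nat \<Rightarrow> real \<Rightarrow> bool" where
  "frac_repr nf f \<longleftrightarrow> f = 1 \<or> (\<exists>fb :: nat \<Rightarrow> nat. (\<forall>i. fb i \<in> {0, 1}) \<and>
      f = (\<Sum>i\<in>{1..nf}. real (fb i) * 2 powr (- real i)))"

definition frac_bit :: "real \<Rightarrow> nat \<Rightarrow> bool" where
  "frac_bit f i \<longleftrightarrow> odd \<lfloor>2 ^ i * f\<rfloor>"

definition frac_part :: "real \<Rightarrow> real" where
  "frac_part c = c - real_of_int \<lfloor>c\<rfloor>"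

definition num_steps :: "nat \<Rightarrow> nat" where
  "num_steps b = nat \<lceil>log 2 (real b)\<rceil>"

text \<open>The Newton loop of INV: returns \<open>x_s\<close> (hat), for w > 1.\<close>
definition inv_loop :: "real \<Rightarrow> nat \<Rightarrow> real" where
  "inv_loop w b =
     (let p = (THE p :: nat. 2 ^ p > w \<and> w \<ge> 2 ^ (p - 1))
      in ((\<lambda>x. trunc_bits b (- w * x\<^sup>2 + 2 * x)) ^^ num_steps b) (2 powr (- real p)))"

definition INV :: "real \<Rightarrow> nat \<Rightarrow> nat \<Rightarrow> nat \<Rightarrow> real" where
  "INV w n m b = (if w = 1 then 1 else inv_loop w b)"

definition SQRT :: "real \<Rightarrow> nat \<Rightarrow> nat \<Rightarrow> nat \<Rightarrow> real" where
  "SQRT w n m b =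
     (if w = 1 then 1 else
      (let xs = inv_loop w b;
           q = (THE q :: nat. 2 powr (1 - real q) > xs \<and> xs \<ge> 2 powr (- real q));
           y0 = 2 powr (real_of_int ((int q - 1) div 2))
       in ((\<lambda>y. trunc_bits b ((3 * y - xs * y ^ 3) / 2)) ^^ num_steps b) y0))"

fun pow2roots :: "real \<Rightarrow> nat \<Rightarrow> nat \<Rightarrow> nat \<Rightarrow> nat \<Rightarrow> real" where
  "pow2roots w n m b 0 = undefined"
| "pow2roots w n m b (Suc 0) = SQRT w n m b"
| "pow2roots w n m b (Suc (Suc i)) = SQRT (pow2roots w n m b (Suc i)) (m + b) m b"

primrec fp_loop :: "(nat \<Rightarrow> real) \<Rightarrow> real \<Rightarrow> nat \<Rightarrow> nat \<Rightarrow> real" where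
  "fp_loop wh f b 0 = 1"
| "fp_loop wh f b (Suc i) =
     (if frac_bit f (Suc i) then trunc_bits b (fp_loop wh f b i * wh (Suc i))
      else fp_loop wh f b i)"

definition FractionalPower :: "real \<Rightarrow> real \<Rightarrow> nat \<Rightarrow> nat \<Rightarrow> nat \<Rightarrow> nat \<Rightarrow> real" where
  "FractionalPower w f n m nf l =
     (let b = max (max n nf) (max (nat \<lceil>5 * (real l + 2 * real m + ln (real nf))\<rceil>) 40)
      in if f = 1 then w else if f = 0 then 1 else
         fp_loop (pow2roots w n m b) f b nf)"

definition FractionalPower2 :: "real \<Rightarrow> real \<Rightarrow> nat \<Rightarrow> nat \<Rightarrow> nat \<Rightarrow> nat \<Rightarrow> real" where
  "FractionalPower2 w f n m nf l =
     (let b = max (max n nf) (max (nat \<lceil>2 * real l + 6 * real m + 2 * ln (real nf)\<rceil>) 40)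
      in if w = 0 then 0 else if f = 1 then w else if f = 0 then 1 else
      (let k = (THE k :: nat. 0 < k \<and> 2 ^ k * w \<ge> 1 \<and> 1 > 2 ^ (k - 1) * w);
           x = 2 ^ k * w;
           c = real k * f;
           zh = FractionalPower x f n m nf l;
           yh = FractionalPower 2 (frac_part c) n m nf l;
           sh = INV yh n 1 (2 * l);
           v = 2 powr (- real_of_int \<lfloor>c\<rfloor>) * zh
       in trunc_bits b (v * sh)))"

end

theory Submission
  imports Defs
begin


lemma trunc_le: "trunc_bits b x \<le> x"
proof -
  have "real_of_int \<lfloor>2 ^ b * x\<rfloor> \<le> 2 ^ b * x" by simp
  thus ?thesis unfolding trunc_bits_def by (simp add: divide_le_eq mult.commute)
qed

lemma trunc_gt: "x < trunc_bits b x + 1 / 2 ^ b"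
proof -
  have "2 ^ b * x < real_of_int \<lfloor>2 ^ b * x\<rfloor> + 1" by linarith
  hence "x < (real_of_int \<lfloor>2 ^ b * x\<rfloor> + 1) / 2 ^ b" by (simp add: less_divide_eq mult.commute)
  thus ?thesis unfolding trunc_bits_def by (simp add: add_divide_distrib)
qed

lemma trunc_mono: "x \<le> y \<Longrightarrow> trunc_bits b x \<le> trunc_bits b y"
  unfolding trunc_bits_def by (intro divide_right_mono) (auto intro: floor_mono)

lemma trunc_int: "trunc_bits b (of_int k) = of_int k"
proof -
  have "\<lfloor>(2::real) ^ b * of_int k\<rfloor> = 2 ^ b * k"
    by (metis floor_of_int of_int_mult of_int_numeral of_int_power)
  thus ?thesis unfolding trunc_bits_def by simp
qed

lemma trunc_nonneg: "0 \<le> x \<Longrightarrow> 0 \<le> trunc_bits b x"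
  using trunc_mono[of 0 x b] trunc_int[of b 0] by simp

lemma trunc_ge1: "1 \<le> x \<Longrightarrow> 1 \<le> trunc_bits b x"
  using trunc_mono[of 1 x b] trunc_int[of b 1] by simp

lemma num_steps: "1 \<le> b \<Longrightarrow> real b \<le> 2 ^ num_steps b"
proof -
  assume b: "1 \<le> b"
  have "real b = 2 powr log 2 (real b)" using b by simp
  also have "\<dots> \<le> 2 powr real (num_steps b)"
    unfolding num_steps_def using b by (intro powr_mono) auto
  finally show ?thesis by (simp add: powr_realpow)
qed

lemma num_steps_pos: "2 \<le> b \<Longrightarrow> 1 \<le> num_steps b"
proof -
  assume b: "2 \<le> b"
  have "0 < log 2 (real b)" using b by simp
  thus ?thesis unfolding num_steps_def by linarith
qed

lemma num_steps0: "num_steps 0 = 0" unfolding num_steps_def by (simp add: log_def)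

lemma newton_rec:
  fixes e :: "nat \<Rightarrow> real" and D :: real
  assumes D: "0 \<le> D" "D \<le> 1/16" and e1: "e 1 \<le> 1/4 + D"
    and st: "\<And>j. 1 \<le> j \<Longrightarrow> e (Suc j) \<le> (e j)^2 + D" and nn: "\<And>j. 0 \<le> e j"
  shows "1 \<le> j \<Longrightarrow> e j \<le> (1/2)^(2^j) + 4 * D"
proof (induction j rule: nat_induct_at_least)
  case base then show ?case using e1 D by (simp add: power2_eq_square)
next
  case (Suc j)
  define a :: real where "a = (1/2)^(2^j)"
  have a0: "0 \<le> a" unfolding a_def by simp
  have h: "(2::nat)^1 \<le> 2^j" using Suc(1) by (intro power_increasing) auto
  have "a \<le> (1/2)^(2^1)" unfolding a_def by (rule power_decreasing) (use h in auto)
  hence a4: "a \<le> 1/4" by (simp add: power2_eq_square)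
  have "e (Suc j) \<le> (e j)^2 + D" using st Suc(1) by simp
  also have "\<dots> \<le> (a + 4*D)^2 + D" using Suc(2) nn[of j] unfolding a_def
    by (intro add_right_mono power_mono) auto
  also have "\<dots> = a^2 + 8*a*D + 16*D*D + D" by (simp add: power2_eq_square algebra_simps)
  also have "\<dots> \<le> a^2 + 4 * D"
  proof -
    have "8*a*D \<le> 2*D" using a4 D by (simp add: mult_right_mono)
    moreover have "16*D*D \<le> 1 * D" using D by (intro mult_right_mono) auto
    ultimately show ?thesis by linarith
  qed
  also have "a^2 = (1/2)^(2^Suc j)" unfolding a_def by (simp add: power_mult[symmetric] mult.commute)
  finally show ?case .
qed




definition invstep :: "real \<Rightarrow> nat \<Rightarrow> real \<Rightarrow> real" where
  "invstep w b x = trunc_bits b (- w * x\<^sup>2 + 2 * x)"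

lemma invstep_props:
  assumes w: "0 < w" and x: "0 \<le> x" "w * x \<le> 1"
  shows "0 \<le> invstep w b x" "w * invstep w b x \<le> 1"
    "1 - w * invstep w b x \<le> (1 - w * x)^2 + w / 2^b"
proof -
  define v where "v = - w * x\<^sup>2 + 2 * x"
  have vv: "v = x * (2 - w * x)" unfolding v_def by (simp add: power2_eq_square algebra_simps)
  have v0: "0 \<le> v" unfolding vv using x by simp
  have ev: "1 - w * v = (1 - w*x)^2" unfolding v_def by (simp add: power2_eq_square algebra_simps)
  have t1: "invstep w b x \<le> v" unfolding invstep_def v_def by (rule trunc_le)
  have t2: "v < invstep w b x + 1/2^b" unfolding invstep_def v_def by (rule trunc_gt)
  show "0 \<le> invstep w b x" unfolding invstep_def using v0 v_def trunc_nonneg by simp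
  have "w * invstep w b x \<le> w * v" using t1 w by simp
  also have "\<dots> \<le> 1" using ev zero_le_power2[of "1 - w*x"] by linarith
  finally show "w * invstep w b x \<le> 1" .
  have "w * v < w * (invstep w b x + 1 / 2^b)" using t2 w by (rule mult_strict_left_mono)
  hence "w * v < w * invstep w b x + w / 2^b" by (simp add: distrib_left)
  thus "1 - w * invstep w b x \<le> (1 - w * x)^2 + w / 2^b" using ev by linarith
qed

lemma the_p:
  fixes w :: real
  assumes "1 < w" "w < 4"
  shows "(THE p :: nat. 2 ^ p > w \<and> w \<ge> 2 ^ (p - 1)) = (if w < 2 then 1 else 2)"
proof (rule the_equality)
  show "2 ^ (if w < 2 then 1 else 2) > w \<and> w \<ge> 2 ^ ((if w < 2 then 1 else 2) - 1)"
    using assms by auto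
next
  fix p :: nat assume h: "2 ^ p > w \<and> w \<ge> 2 ^ (p - 1)"
  consider "p = 0" | "p = 1" | "p = 2" | "p \<ge> 3" by linarith
  then show "p = (if w < 2 then 1 else 2)"
  proof cases
    case 4
    have "(2::real) ^ 2 \<le> 2 ^ (p - 1)" using 4 by (intro power_increasing) auto
    then show ?thesis using h assms by simp
  qed (use h assms in auto)
qed

lemma inv_loop_eq:
  assumes "1 < w" "w < 4"
  shows "inv_loop w b = (invstep w b ^^ num_steps b) (if w < 2 then 1/2 else 1/4)"
proof -
  have e: "(\<lambda>x. trunc_bits b (- w * x\<^sup>2 + 2 * x)) = invstep w b"
    unfolding invstep_def by (rule ext) simp
  have "(2::real) powr (- real (if w < 2 then 1 else 2 :: nat)) = (if w < 2 then 1/2 else 1/4)"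
    by (auto simp: powr_minus powr_realpow)
  thus ?thesis unfolding inv_loop_def Let_def the_p[OF assms] e by simp
qed

lemma inv_iter:
  fixes b :: nat
  assumes w: "1 < w" "w < 4"
  defines "xs \<equiv> \<lambda>j. (invstep w b ^^ j) (if w < 2 then 1/2 else 1/4)"
  shows "0 \<le> xs j \<and> w * xs j \<le> 1" "1 - w * xs 0 \<le> 1/2"
    "1 - w * xs (Suc j) \<le> (1 - w * xs j)^2 + w / 2^b"
proof -
  have s: "xs (Suc j) = invstep w b (xs j)" for j unfolding xs_def by simp
  show "0 \<le> xs j \<and> w * xs j \<le> 1"
  proof (induction j)
    case 0 then show ?case using w unfolding xs_def by auto
  next
    case (Suc j) then show ?case using invstep_props[of w "xs j" b] w s by auto
  qed
  thus "1 - w * xs (Suc j) \<le> (1 - w * xs j)^2 + w / 2^b"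
    using invstep_props[of w "xs j" b] w s by auto
  show "1 - w * xs 0 \<le> 1/2" using w unfolding xs_def by auto
qed

lemma inv_loop_props:
  assumes w: "1 < w" "w < 4"
  shows "0 \<le> inv_loop w b" "w * inv_loop w b \<le> 1"
    "w / 2^b \<le> 1/4 \<Longrightarrow> 1 - w * inv_loop w b \<le> 1/2"
    "2 \<le> b \<Longrightarrow> w / 2^b \<le> 1/16 \<Longrightarrow> 1 - w * inv_loop w b \<le> (1/2)^b + 4 * (w / 2^b)"
proof -
  define xs where "xs = (\<lambda>j. (invstep w b ^^ j) (if w < 2 then 1/2 else 1/4))"
  define e where "e = (\<lambda>j. 1 - w * xs j)"
  have il: "inv_loop w b = xs (num_steps b)" unfolding xs_def by (rule inv_loop_eq[OF w])
  have P: "0 \<le> xs j \<and> w * xs j \<le> 1" for j using inv_iter(1)[OF w] unfolding xs_def by blast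
  have E0: "e 0 \<le> 1/2" using inv_iter(2)[OF w] unfolding xs_def e_def by blast
  have ES: "e (Suc j) \<le> (e j)^2 + w / 2^b" for j using inv_iter(3)[OF w] unfolding xs_def e_def by blast
  have en: "0 \<le> e j" for j using P[of j] unfolding e_def by simp
  show "0 \<le> inv_loop w b" "w * inv_loop w b \<le> 1" using P il by auto
  show "1 - w * inv_loop w b \<le> 1/2" if D: "w / 2^b \<le> 1/4"
  proof -
    have "e j \<le> 1/2" for j
    proof (induction j)
      case 0 then show ?case using E0 .
    next
      case (Suc j)
      have "(e j)^2 \<le> (1/2)^2" using Suc en[of j] by (intro power_mono) auto
      hence "(e j)^2 \<le> 1/4" by (simp add: power2_eq_square)
      then show ?case using ES[of j] D by linarith
    qed
    thus ?thesis using il unfolding e_def by simp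
  qed
  show "1 - w * inv_loop w b \<le> (1/2)^b + 4 * (w / 2^b)" if b: "2 \<le> b" and D: "w / 2^b \<le> 1/16"
  proof -
    have e1: "e 1 \<le> 1/4 + w/2^b"
    proof -
      have "(e 0)^2 \<le> (1/2)^2" using E0 en[of 0] by (intro power_mono) auto
      then show ?thesis using ES[of 0] by (simp add: power2_eq_square)
    qed
    have s1: "1 \<le> num_steps b" using num_steps_pos b by simp
    have "e (num_steps b) \<le> (1/2)^(2^num_steps b) + 4 * (w/2^b)"
      by (rule newton_rec[of "w/2^b" e, OF _ D e1 ES en s1]) (use w in simp)
    also have "(1/2::real)^(2^num_steps b) \<le> (1/2)^b"
    proof -
      have "real b \<le> 2 ^ num_steps b" using num_steps b by simp
      hence "b \<le> 2 ^ num_steps b" by (metis of_nat_le_iff of_nat_numeral of_nat_power)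
      thus ?thesis by (intro power_decreasing) auto
    qed
    finally show ?thesis using il unfolding e_def by simp
  qed
qed




definition sqstep :: "real \<Rightarrow> nat \<Rightarrow> real \<Rightarrow> real" where
  "sqstep xs b y = trunc_bits b ((3 * y - xs * y ^ 3) / 2)"

lemma sqstep_props:
  assumes xs: "0 < xs" "xs \<le> 1" and y: "1 \<le> y" "xs * y^2 \<le> 1"
  shows "1 \<le> sqstep xs b y" "xs * (sqstep xs b y)^2 \<le> 1"
    "1 - xs * (sqstep xs b y)^2 \<le> (3 * (1 - xs*y^2)^2 + (1 - xs*y^2)^3)/4 + 3 / 2^b"
proof -
  define g where "g = (3 * y - xs * y ^ 3) / 2"
  define y' where "y' = sqstep xs b y"
  define \<delta> :: real where "\<delta> = 1 / 2^b"
  have d0: "0 < \<delta>" "\<delta> \<le> 1" unfolding \<delta>_def by auto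
  have xy: "xs * y \<le> 1"
  proof -
    have "(xs*y)^2 = xs * (xs * y^2)" by (simp add: power2_eq_square)
    also have "\<dots> \<le> xs * 1" using y xs by (intro mult_left_mono) auto
    finally have "(xs*y)^2 \<le> 1\<^sup>2" using xs by simp
    thus ?thesis using power2_le_imp_le[of "xs*y" 1] by simp
  qed
  have g2: "2 * g = 3 * y - xs * y ^ 3" unfolding g_def by simp
  have gm: "2 * g - 2 = (y - 1) * (3 - xs*y^2 - xs*y - xs) + (1 - xs)"
    unfolding g2 by algebra
  have "0 \<le> (y - 1) * (3 - xs*y^2 - xs*y - xs)" using y xs xy by (intro mult_nonneg_nonneg) auto
  hence g1: "1 \<le> g" using gm xs by linarith
  show y1: "1 \<le> sqstep xs b y" unfolding sqstep_def using g1 g_def trunc_ge1 by simp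
  have yg: "y' \<le> g" unfolding y'_def sqstep_def g_def by (rule trunc_le)
  have gy: "g < y' + \<delta>" unfolding y'_def sqstep_def g_def \<delta>_def by (rule trunc_gt)
  define e where "e = 1 - xs * y^2"
  have eg: "1 - xs * g^2 = (3 * e^2 + e^3)/4"
  proof -
    have "4 * (1 - xs * g^2) = 4 - xs * (2 * g)^2" by (simp add: power2_eq_square)
    also have "xs * (2 * g)^2 = (xs*y^2)*(3 - xs*y^2)^2" unfolding g2 by algebra
    also have "4 - (xs*y^2)*(3 - xs*y^2)^2 = 3*e^2 + e^3" unfolding e_def by algebra
    finally show ?thesis by simp
  qed
  have e0: "0 \<le> e" unfolding e_def using y by simp
  have "0 \<le> (3 * e^2 + e^3)/4" using e0 by simp
  hence xg: "xs * g^2 \<le> 1" using eg by linarith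
  have "xs * y'^2 \<le> xs * g^2" using y1 yg xs unfolding y'_def by (intro mult_left_mono power_mono) auto
  thus "xs * (sqstep xs b y)^2 \<le> 1" using xg unfolding y'_def by linarith
  have xg1: "xs * g \<le> 1"
  proof -
    have "(xs*g)^2 = xs * (xs * g^2)" by (simp add: power2_eq_square)
    also have "\<dots> \<le> xs * 1" using xg xs by (intro mult_left_mono) auto
    finally have "(xs*g)^2 \<le> 1\<^sup>2" using xs by simp
    thus ?thesis using power2_le_imp_le[of "xs*g" 1] by simp
  qed
  have "g^2 \<le> (y' + \<delta>)^2" using gy g1 by (intro power_mono) auto
  hence "g^2 \<le> y'^2 + 2*y'*\<delta> + \<delta>^2" by (simp add: power2_eq_square algebra_simps)
  hence "xs * g^2 \<le> xs * (y'^2 + 2*y'*\<delta> + \<delta>^2)" using xs by (intro mult_left_mono) auto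
  hence A: "xs * g^2 \<le> xs * y'^2 + 2 * (xs * y') * \<delta> + xs * \<delta>^2" by (simp add: algebra_simps)
  have "xs * y' \<le> xs * g" using yg xs by (intro mult_left_mono) auto
  hence "xs * y' \<le> 1" using xg1 by linarith
  hence B: "2 * (xs * y') * \<delta> \<le> 2 * 1 * \<delta>" using d0 by (intro mult_right_mono mult_left_mono) auto
  have "xs * \<delta> \<le> 1 * 1" using xs d0 by (intro mult_mono) auto
  hence "xs * \<delta> * \<delta> \<le> 1 * \<delta>" using d0 by (intro mult_right_mono) auto
  hence "xs * \<delta>^2 \<le> 1 * \<delta>" by (simp add: power2_eq_square mult.assoc)
  hence "1 - xs * y'^2 \<le> 1 - xs * g^2 + 3 * \<delta>" using A B by linarith
  thus "1 - xs * (sqstep xs b y)^2 \<le> (3 * (1 - xs*y^2)^2 + (1 - xs*y^2)^3)/4 + 3 / 2^b"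
    unfolding y'_def using eg e_def \<delta>_def by simp
qed




lemma the_q:
  assumes "1/4 < xs" "xs < 1"
  shows "(THE q :: nat. 2 powr (1 - real q) > xs \<and> xs \<ge> 2 powr (- real q)) = (if xs \<ge> 1/2 then 1 else 2)"
proof (rule the_equality)
  show "2 powr (1 - real (if xs \<ge> 1/2 then 1 else 2 :: nat)) > xs \<and> xs \<ge> 2 powr (- real (if xs \<ge> 1/2 then 1 else 2 :: nat))"
    using assms by (auto simp: powr_minus powr_realpow powr_diff)
next
  fix q :: nat assume h: "2 powr (1 - real q) > xs \<and> xs \<ge> 2 powr (- real q)"
  consider "q = 0" | "q = 1" | "q = 2" | "q \<ge> 3" by linarith
  then show "q = (if xs \<ge> 1/2 then 1 else 2)"
  proof cases
    case 4
    have "2 powr (1 - real q) \<le> 2 powr (-2)" using 4 by (intro powr_mono) auto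
    moreover have "(2::real) powr (-2) = 1/4" by (simp add: powr_minus powr_realpow)
    ultimately show ?thesis using h assms by linarith
  qed (use h assms in \<open>auto simp: powr_minus powr_realpow powr_diff\<close>)
qed

lemma sqrt_close:
  fixes y a :: real
  assumes "1 \<le> y" "1 \<le> a" "\<bar>y^2 - a\<bar> \<le> E"
  shows "\<bar>y - sqrt a\<bar> \<le> E / 2"
proof -
  have sa: "1 \<le> sqrt a" using assms by simp
  have "y^2 - a = (y - sqrt a) * (y + sqrt a)"
    using assms by (simp add: power2_eq_square algebra_simps)
  hence "\<bar>y^2 - a\<bar> = \<bar>y - sqrt a\<bar> * (y + sqrt a)"
    using assms sa by (simp add: abs_mult)
  also have "\<dots> \<ge> \<bar>y - sqrt a\<bar> * 2" using assms sa by (intro mult_left_mono) linarith+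
  finally have "\<bar>y - sqrt a\<bar> * 2 \<le> E" using assms by linarith
  thus ?thesis by (simp add: le_divide_eq)
qed

lemma SQRT_props:
  assumes a: "1 \<le> a" "a \<le> 2" and b: "40 \<le> b"
  shows "1 \<le> SQRT a n m b" "SQRT a n m b \<le> 2" "\<bar>SQRT a n m b - sqrt a\<bar> \<le> 14 / 2^b"
proof -
  have pb: "(2::real)^40 \<le> 2^b" using b by (intro power_increasing) auto
  have pb2: "1 / 2^b \<le> (1::real) / 2^40" using pb by (intro divide_left_mono) auto
  have "1 \<le> SQRT a n m b \<and> SQRT a n m b \<le> 2 \<and> \<bar>SQRT a n m b - sqrt a\<bar> \<le> 14 / 2^b"
  proof (cases "a = 1")
    case True then show ?thesis unfolding SQRT_def by simp
  next
    case False
    hence a1: "1 < a" using a by simp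
    define xs where "xs = inv_loop a b"
    have X: "0 \<le> xs" "a * xs \<le> 1" using inv_loop_props(1,2)[of a b] a1 a unfolding xs_def by auto
    have ab: "a / 2^b \<le> 2 / 2^b" using a by (intro divide_right_mono) auto
    have "2 / 2^b \<le> (1::real) / 16" using pb by (simp add: divide_simps)
    hence ex: "1 - a * xs \<le> (1/2)^b + 4 * (a / 2^b)"
      using inv_loop_props(4)[of a b] a1 a b ab unfolding xs_def by auto
    have ex2: "1 - a * xs \<le> 9 / 2^b" using ex ab by (simp add: power_one_over)
    have "9 / 2^b \<le> (9::real) / 2^40" using pb by (intro divide_left_mono) auto
    hence axs: "0.98 \<le> a * xs" using ex2 by simp
    have xsl: "0.49 \<le> xs"
    proof (rule ccontr)
      assume "\<not> 0.49 \<le> xs"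
      moreover have "a * xs \<le> 2 * xs" using a X by (intro mult_right_mono) auto
      ultimately have "a * xs < 0.98" by linarith
      thus False using axs by simp
    qed
    have xs1: "xs < 1"
    proof (rule ccontr)
      assume "\<not> xs < 1"
      hence "a * 1 \<le> a * xs" using a1 by (intro mult_left_mono) auto
      hence "1 < a * xs" using a1 by linarith
      thus False using X by simp
    qed
    have q: "(THE q :: nat. 2 powr (1 - real q) > xs \<and> xs \<ge> 2 powr (- real q)) = (if xs \<ge> 1/2 then 1 else 2)"
      using xsl xs1 by (intro the_q) auto
    have y0: "(2::real) powr (real_of_int ((int (if xs \<ge> 1/2 then 1 else 2) - 1) div 2)) = 1"
      by auto
    have e: "(\<lambda>y. trunc_bits b ((3 * y - xs * y ^ 3) / 2)) = sqstep xs b"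
      unfolding sqstep_def by (rule ext) simp
    define ys where "ys = (\<lambda>j. (sqstep xs b ^^ j) 1)"
    have S: "SQRT a n m b = ys (num_steps b)"
      unfolding SQRT_def ys_def Let_def using False q y0 e unfolding xs_def[symmetric] by simp
    have ysS: "ys (Suc j) = sqstep xs b (ys j)" for j unfolding ys_def by simp
    have xsp: "0 < xs" "xs \<le> 1" using xsl xs1 by auto
    have P: "1 \<le> ys j \<and> xs * (ys j)^2 \<le> 1" for j
    proof (induction j)
      case 0 then show ?case using xsp unfolding ys_def by simp
    next
      case (Suc j) then show ?case using sqstep_props(1,2)[OF xsp, of "ys j" b] ysS by simp
    qed
    define ey where "ey = (\<lambda>j. 1 - xs * (ys j)^2)"
    have en: "0 \<le> ey j" for j using P[of j] unfolding ey_def by simp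
    have el: "ey j \<le> 1" for j using P[of j] xsp unfolding ey_def by simp
    have ES: "ey (Suc j) \<le> (3 * (ey j)^2 + (ey j)^3)/4 + 3 / 2^b" for j
      using sqstep_props(3)[OF xsp, of "ys j" b] P[of j] ysS unfolding ey_def by simp
    have ES2: "ey (Suc j) \<le> (ey j)^2 + 3 / 2^b" for j
    proof -
      have "(ey j)^2 * ey j \<le> (ey j)^2 * 1" using en[of j] el[of j]
        by (intro mult_left_mono) auto
      hence "(ey j)^3 \<le> (ey j)^2" by (simp add: power3_eq_cube power2_eq_square)
      hence "(3 * (ey j)^2 + (ey j)^3)/4 \<le> (ey j)^2" by (simp add: divide_le_eq)
      thus ?thesis using ES[of j] by linarith
    qed
    have e0: "ey 0 \<le> 0.51" using xsl unfolding ey_def ys_def by simp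
    have e1: "ey 1 \<le> 1/4 + 3 / 2^b"
    proof -
      have "(ey 0)^2 \<le> 0.51^2" using e0 en[of 0] by (intro power_mono) auto
      moreover have "(ey 0)^3 \<le> 0.51^3" using e0 en[of 0] by (intro power_mono) auto
      ultimately have "(ey 0)^2 \<le> 0.2601" "(ey 0)^3 \<le> 0.132651" by (simp_all add: power2_eq_square power3_eq_cube)
      hence "(3 * (ey 0)^2 + (ey 0)^3)/4 \<le> 1/4" by simp
      thus ?thesis using ES[of 0] by (simp only: One_nat_def)
    qed
    have D: "0 \<le> 3 / (2::real)^b" "3 / (2::real)^b \<le> 1/16" using pb by (auto simp: divide_simps)
    have s1: "1 \<le> num_steps b" using num_steps_pos b by simp
    have "ey (num_steps b) \<le> (1/2)^(2^num_steps b) + 4 * (3 / 2^b)"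
      by (rule newton_rec[of "3/2^b" ey, OF D e1 ES2 en s1])
    also have "(1/2::real)^(2^num_steps b) \<le> (1/2)^b"
    proof -
      have "real b \<le> 2 ^ num_steps b" using num_steps b by simp
      hence "b \<le> 2 ^ num_steps b" by (metis of_nat_le_iff of_nat_numeral of_nat_power)
      thus ?thesis by (intro power_decreasing) auto
    qed
    finally have eyf: "ey (num_steps b) \<le> 13 / 2^b" by (simp add: power_one_over)
    define y where "y = ys (num_steps b)"
    have yP: "1 \<le> y" "xs * y^2 \<le> 1" using P unfolding y_def by auto
    have "xs * (y^2 - a) = (1 - a * xs) - ey (num_steps b)"
      unfolding ey_def y_def by (simp add: algebra_simps)
    hence "\<bar>xs * (y^2 - a)\<bar> \<le> 13 / 2^b"
      using eyf en[of "num_steps b"] ex2 X by (simp add: abs_le_iff)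
    hence "xs * \<bar>y^2 - a\<bar> \<le> 13 / 2^b" using xsp by (simp add: abs_mult)
    moreover have "0.49 * \<bar>y^2 - a\<bar> \<le> xs * \<bar>y^2 - a\<bar>" using xsl by (intro mult_right_mono) auto
    ultimately have "0.49 * \<bar>y^2 - a\<bar> \<le> 13 / 2^b" by linarith
    hence "\<bar>y^2 - a\<bar> \<le> (13 / 2^b) / 0.49" by (simp add: le_divide_eq mult.commute mult.left_commute)
    hence "\<bar>y - sqrt a\<bar> \<le> (13 / 2^b) / 0.49 / 2" using sqrt_close[OF yP(1) a(1)] by blast
    also have "\<dots> \<le> 14 / 2^b" by (simp add: divide_simps)
    finally have err: "\<bar>y - sqrt a\<bar> \<le> 14 / 2^b" .
    have "(49/100) * y^2 \<le> xs * y^2" using xsl by (intro mult_right_mono) auto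
    hence "y^2 \<le> 4" using yP by linarith
    hence "y^2 \<le> 2^2" by simp
    hence "y \<le> 2" using power2_le_imp_le[of y 2] by simp
    thus ?thesis using S yP err unfolding y_def by simp
  qed
  thus "1 \<le> SQRT a n m b" "SQRT a n m b \<le> 2" "\<bar>SQRT a n m b - sqrt a\<bar> \<le> 14 / 2^b" by auto
qed




lemma sqrt_diff_le: "1 \<le> u \<Longrightarrow> 1 \<le> v \<Longrightarrow> \<bar>sqrt u - sqrt v\<bar> \<le> \<bar>u - v\<bar> / 2"
proof -
  assume u: "1 \<le> u" and v: "1 \<le> v"
  have su: "1 \<le> sqrt u" "1 \<le> sqrt v" using u v by auto
  have "u - v = (sqrt u - sqrt v) * (sqrt u + sqrt v)" using u v by (simp add: algebra_simps)
  hence "\<bar>u - v\<bar> = \<bar>sqrt u - sqrt v\<bar> * (sqrt u + sqrt v)" using su by (simp add: abs_mult)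
  also have "\<dots> \<ge> \<bar>sqrt u - sqrt v\<bar> * 2" using su by (intro mult_left_mono) linarith+
  finally have "\<bar>sqrt u - sqrt v\<bar> * 2 \<le> \<bar>u - v\<bar>" by linarith
  thus ?thesis by (simp add: le_divide_eq)
qed

lemma pow2roots_props:
  assumes x: "1 \<le> x" "x \<le> 2" and b: "40 \<le> b"
  shows "1 \<le> pow2roots x n m b (Suc j) \<and> pow2roots x n m b (Suc j) \<le> 2 \<and>
         \<bar>pow2roots x n m b (Suc j) - x powr (1 / 2^Suc j)\<bar> \<le> 28 / 2^b"
proof (induction j)
  case 0
  have "x powr (1/2) = sqrt x" using x by (simp add: powr_half_sqrt)
  then show ?case using SQRT_props[OF x b, of n m] by simp
next
  case (Suc j)
  define u where "u = pow2roots x n m b (Suc j)"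
  define v where "v = x powr (1 / 2^Suc j)"
  have v1: "1 \<le> v" unfolding v_def using x by (simp add: ge_one_powr_ge_zero)
  have u: "1 \<le> u" "u \<le> 2" "\<bar>u - v\<bar> \<le> 28 / 2^b" using Suc unfolding u_def v_def by auto
  have sv: "sqrt v = x powr (1 / 2^Suc (Suc j))"
  proof -
    have "sqrt v = v powr (1/2)" using v1 by (simp add: powr_half_sqrt)
    also have "\<dots> = x powr (1 / 2^Suc j * (1/2))" unfolding v_def by (simp add: powr_powr)
    finally show ?thesis by simp
  qed
  have P: "pow2roots x n m b (Suc (Suc j)) = SQRT u (m + b) m b" unfolding u_def by simp
  have S: "1 \<le> SQRT u (m + b) m b" "SQRT u (m + b) m b \<le> 2" "\<bar>SQRT u (m + b) m b - sqrt u\<bar> \<le> 14 / 2^b"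
    using SQRT_props[OF u(1,2) b] by auto
  have "\<bar>sqrt u - sqrt v\<bar> \<le> \<bar>u - v\<bar> / 2" using sqrt_diff_le u v1 by simp
  hence "\<bar>sqrt u - sqrt v\<bar> \<le> 14 / 2^b" using u(3) by simp
  hence "\<bar>SQRT u (m + b) m b - sqrt v\<bar> \<le> 28 / 2^b" using S(3) by linarith
  then show ?case using P S sv by simp
qed

lemma floor_double: "\<lfloor>2 * (y::real)\<rfloor> = 2 * \<lfloor>y\<rfloor> + (if odd \<lfloor>2 * y\<rfloor> then 1 else 0)"
proof -
  have a: "2 * \<lfloor>y\<rfloor> \<le> \<lfloor>2 * y\<rfloor>" by (simp add: le_floor_iff)
  have b: "\<lfloor>2 * y\<rfloor> \<le> 2 * \<lfloor>y\<rfloor> + 1"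
  proof -
    have "2 * y < 2 * \<lfloor>y\<rfloor> + 2" by linarith
    thus ?thesis by (simp add: floor_le_iff)
  qed
  have "\<lfloor>2 * y\<rfloor> = 2 * \<lfloor>y\<rfloor> \<or> \<lfloor>2 * y\<rfloor> = 2 * \<lfloor>y\<rfloor> + 1" using a b by linarith
  thus ?thesis by auto
qed

lemma F_step:
  "\<lfloor>2 ^ Suc j * (f::real)\<rfloor> = 2 * \<lfloor>2 ^ j * f\<rfloor> + (if frac_bit f (Suc j) then 1 else 0)"
  unfolding frac_bit_def using floor_double[of "2 ^ j * f"] by (simp add: mult.assoc)

lemma fp_loop_props:
  fixes x f :: real and wh :: "nat \<Rightarrow> real"
  assumes x: "1 \<le> x" "x \<le> 2" and f: "0 \<le> f" "f < 1"
    and wh: "\<And>j. 1 \<le> wh (Suc j) \<and> \<bar>wh (Suc j) - x powr (1 / 2^Suc j)\<bar> \<le> 28 / 2^b"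
    and J: "170 * real J \<le> 2^b"
  shows "j \<le> J \<Longrightarrow> 1 \<le> fp_loop wh f b j \<and>
     \<bar>fp_loop wh f b j - x powr (\<lfloor>2^j * f\<rfloor> / 2^j)\<bar> \<le> 85 / 2^b * j * x powr (\<lfloor>2^j * f\<rfloor> / 2^j)"
proof (induction j)
  case 0
  have "\<lfloor>f\<rfloor> = 0" using f by (simp add: floor_eq_iff)
  then show ?case using x by simp
next
  case (Suc j)
  define z where "z = fp_loop wh f b j"
  define P where "P = x powr (\<lfloor>2^j * f\<rfloor> / 2^j)"
  define w where "w = x powr (1 / 2^Suc j)"
  define c :: real where "c = 85 / 2^b"
  have IH: "1 \<le> z" "\<bar>z - P\<bar> \<le> c * j * P" using Suc unfolding z_def P_def c_def by auto
  have Fj: "0 \<le> \<lfloor>2^j * f\<rfloor>" using f by simp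
  have Fj2: "\<lfloor>2^j * f\<rfloor> \<le> 2^j * f" by simp
  have "2^j * f \<le> 2^j * 1" using f by (intro mult_left_mono) auto
  hence "real_of_int \<lfloor>2^j * f\<rfloor> \<le> 2^j" using Fj2 by linarith
  hence Fl: "\<lfloor>2^j * f\<rfloor> / 2^j \<le> (1::real)" by (simp add: divide_le_eq)
  have P1: "1 \<le> P" unfolding P_def using x Fj by (simp add: ge_one_powr_ge_zero)
  have P2: "P \<le> 2"
  proof -
    have "P \<le> x powr 1" unfolding P_def using x Fl by (intro powr_mono) auto
    thus ?thesis using x by simp
  qed
  have w1: "1 \<le> w" unfolding w_def using x by (simp add: ge_one_powr_ge_zero)
  have c0: "0 \<le> c" unfolding c_def by simp
  have cj: "c * j \<le> 1/2"
  proof -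
    have "c * j \<le> c * J" using Suc.prems c0 by (intro mult_left_mono) auto
    also have "c * J = 85 * J / 2^b" unfolding c_def by simp
    also have "\<dots> \<le> 1/2" using J by (simp add: divide_simps)
    finally show ?thesis .
  qed
  have "c * j * P \<le> 1/2 * 2" using mult_mono[OF cj P2] P1 by simp
  hence z3: "z \<le> 3" using IH P2 by linarith
  have Pn: "x powr (\<lfloor>2^Suc j * f\<rfloor> / 2^Suc j) = (if frac_bit f (Suc j) then P * w else P)"
  proof -
    have "real_of_int \<lfloor>2^Suc j * f\<rfloor> / 2^Suc j = \<lfloor>2^j * f\<rfloor> / 2^j + (if frac_bit f (Suc j) then 1 / 2^Suc j else 0)"
      unfolding F_step by (auto simp: add_divide_distrib)
    thus ?thesis unfolding P_def w_def by (simp add: powr_add)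
  qed
  show ?case
  proof (cases "frac_bit f (Suc j)")
    case False
    hence e: "fp_loop wh f b (Suc j) = z" unfolding z_def by simp
    have "c * j * P \<le> c * Suc j * P" using c0 P1 by (intro mult_right_mono mult_left_mono) auto
    then show ?thesis using e Pn False IH unfolding c_def by simp
  next
    case True
    define wt where "wt = wh (Suc j)"
    have wt: "1 \<le> wt" "\<bar>wt - w\<bar> \<le> 28 / 2^b" using wh[of j] unfolding wt_def w_def by auto
    have e: "fp_loop wh f b (Suc j) = trunc_bits b (z * wt)" using True unfolding z_def wt_def by simp
    have zw1: "1 \<le> z * wt" using mult_mono[OF IH(1) wt(1)] IH(1) by simp
    have t1: "trunc_bits b (z * wt) \<le> z * wt" by (rule trunc_le)
    have t2: "z * wt < trunc_bits b (z * wt) + 1 / 2^b" by (rule trunc_gt)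
    have "z * wt - P * w = (z - P) * w + z * (wt - w)" by (simp add: algebra_simps)
    hence "\<bar>z * wt - P * w\<bar> \<le> \<bar>(z - P) * w\<bar> + \<bar>z * (wt - w)\<bar>"
      using abs_triangle_ineq by simp
    also have "\<dots> = \<bar>z - P\<bar> * w + z * \<bar>wt - w\<bar>" using w1 IH by (simp add: abs_mult)
    also have "\<dots> \<le> (c * j * P) * w + 3 * (28 / 2^b)"
    proof (rule add_mono)
      show "\<bar>z - P\<bar> * w \<le> (c * j * P) * w" using IH(2) w1 by (simp add: mult_right_mono)
      show "z * \<bar>wt - w\<bar> \<le> 3 * (28 / 2^b)" using mult_mono[OF z3 wt(2)] by simp
    qed
    finally have A: "\<bar>z * wt - P * w\<bar> \<le> c * j * (P * w) + 84 / 2^b" by (simp add: mult.assoc)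
    have "\<bar>trunc_bits b (z * wt) - P * w\<bar> \<le> \<bar>z * wt - P * w\<bar> + 1 / 2^b" using t1 t2 by linarith
    also have "\<dots> \<le> c * j * (P * w) + c" using A unfolding c_def by simp
    also have "\<dots> \<le> c * Suc j * (P * w)"
    proof -
      have "1 \<le> P * w" using mult_mono[OF P1 w1] P1 by simp
      hence "c \<le> c * (P * w)" using c0 by (simp add: mult_le_cancel_left1)
      thus ?thesis by (simp add: algebra_simps)
    qed
    finally show ?thesis using e Pn True trunc_ge1[OF zw1, of b] unfolding c_def by simp
  qed
qed




lemma pow_lin: "32 \<le> t \<Longrightarrow> 2048 * t \<le> (2::nat) ^ t"
proof (induction t rule: nat_induct_at_least)
  case base then show ?case by simp
next
  case (Suc t) then show ?case by simp
qed

lemma num_bound: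
  fixes b nf l :: nat
  assumes "40 \<le> b" "nf \<le> b" "5 * l \<le> b"
  shows "680 * nf * 2 ^ l \<le> (2::nat) ^ b"
proof -
  define t where "t = b - l"
  have t: "32 \<le> t" "b \<le> 2 * t" "b = l + t" using assms unfolding t_def by auto
  have "680 * nf \<le> 2048 * t" using t assms by linarith
  also have "\<dots> \<le> 2 ^ t" using pow_lin t by simp
  finally have "680 * nf * 2 ^ l \<le> 2 ^ t * 2 ^ l" by simp
  also have "\<dots> = 2 ^ b" using t by (simp add: power_add)
  finally show ?thesis .
qed

lemma num_bound_real:
  fixes b nf l :: nat
  assumes "40 \<le> b" "nf \<le> b" "5 * l \<le> b"
  shows "680 * real nf * 2 ^ l \<le> (2::real) ^ b"
proof -
  have "real (680 * nf * 2 ^ l) \<le> real ((2::nat) ^ b)" using num_bound[OF assms] by linarith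
  thus ?thesis by simp
qed

lemma FP_props:
  fixes x g :: real and n m nf l :: nat
  assumes x: "1 \<le> x" "x \<le> 2" and g: "0 \<le> g" "g < 1" and N: "2 ^ nf * g = real_of_int N"
  shows "1 \<le> FractionalPower x g n m nf l \<and>
         \<bar>FractionalPower x g n m nf l - x powr g\<bar> \<le> 1 / (4 * 2 ^ l)"
proof -
  define b where "b = max (max n nf) (max (nat \<lceil>5 * (real l + 2 * real m + ln (real nf))\<rceil>) 40)"
  have lnn: "0 \<le> ln (real nf)" by (cases "nf = 0") auto
  have b40: "40 \<le> b" unfolding b_def by auto
  have hnfb: "nf \<le> b" unfolding b_def by auto
  have "real (5 * l) \<le> 5 * (real l + 2 * real m + ln (real nf))" using lnn by simp
  hence "5 * l \<le> nat \<lceil>5 * (real l + 2 * real m + ln (real nf))\<rceil>" by linarith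
  hence b5: "5 * l \<le> b" unfolding b_def by linarith
  have NB: "680 * real nf * 2 ^ l \<le> (2::real) ^ b" by (rule num_bound_real[OF b40 hnfb b5])
  show ?thesis
  proof (cases "g = 0")
    case True then show ?thesis unfolding FractionalPower_def Let_def using x by simp
  next
    case False
    hence FP: "FractionalPower x g n m nf l = fp_loop (pow2roots x n m b) g b nf"
      unfolding FractionalPower_def Let_def b_def using g by simp
    have wh: "\<And>j. 1 \<le> pow2roots x n m b (Suc j) \<and> \<bar>pow2roots x n m b (Suc j) - x powr (1 / 2^Suc j)\<bar> \<le> 28 / 2^b"
      using pow2roots_props[OF x b40] by blast
    have J: "170 * real nf \<le> 2^b"
    proof -
      have "170 * real nf \<le> 680 * real nf * 2 ^ l"
      proof -
        have "(1::real) \<le> 2 ^ l" by simp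
        hence "680 * real nf * 1 \<le> 680 * real nf * 2 ^ l" by (intro mult_left_mono) auto
        thus ?thesis by simp
      qed
      thus ?thesis using NB by linarith
    qed
    have L: "1 \<le> fp_loop (pow2roots x n m b) g b nf \<and>
     \<bar>fp_loop (pow2roots x n m b) g b nf - x powr (\<lfloor>2^nf * g\<rfloor> / 2^nf)\<bar> \<le> 85 / 2^b * nf * x powr (\<lfloor>2^nf * g\<rfloor> / 2^nf)"
      by (rule fp_loop_props[OF x g wh J]) simp
    have fl: "real_of_int \<lfloor>2^nf * g\<rfloor> / 2^nf = g" using N by (simp add: divide_simps) (metis N mult.commute)
    have "x powr g \<le> x powr 1" using x g by (intro powr_mono) auto
    hence xg: "x powr g \<le> 2" using x by simp
    have "85 / 2^b * nf * x powr g \<le> 85 / 2^b * nf * 2"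
      using xg by (intro mult_left_mono) auto
    also have "\<dots> = 170 * real nf / 2^b" by simp
    also have "\<dots> \<le> 1 / (4 * 2 ^ l)" using NB by (simp add: divide_simps)
    finally show ?thesis using L FP fl by simp
  qed
qed




lemma the_k:
  fixes w :: real
  assumes w: "0 < w" "w < 1"
  shows "\<exists>K. (THE k :: nat. 0 < k \<and> 2 ^ k * w \<ge> 1 \<and> 1 > 2 ^ (k - 1) * w) = K \<and>
     0 < K \<and> 2 ^ K * w \<ge> 1 \<and> 1 > 2 ^ (K - 1) * w"
proof -
  obtain n :: nat where n: "1 / w < real n" using reals_Archimedean2 by blast
  have "real n < 2 ^ n" by (rule of_nat_less_two_power)
  hence "1 / w < 2 ^ n" using n by linarith
  hence ex: "1 \<le> 2 ^ n * w" using w by (simp add: divide_less_eq)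
  define K where "K = (LEAST k :: nat. 1 \<le> 2 ^ k * w)"
  have K1: "1 \<le> 2 ^ K * w" unfolding K_def by (rule LeastI[of _ n]) (rule ex)
  have Km: "\<And>k. k < K \<Longrightarrow> \<not> 1 \<le> 2 ^ k * w" unfolding K_def by (rule not_less_Least)
  have K0: "0 < K" using K1 w by (cases K) auto
  have K2: "1 > 2 ^ (K - 1) * w" using Km[of "K - 1"] K0 by simp
  have "(THE k :: nat. 0 < k \<and> 2 ^ k * w \<ge> 1 \<and> 1 > 2 ^ (k - 1) * w) = K"
  proof (rule the_equality)
    show "0 < K \<and> 2 ^ K * w \<ge> 1 \<and> 1 > 2 ^ (K - 1) * w" using K0 K1 K2 by simp
  next
    fix k assume h: "0 < k \<and> 2 ^ k * w \<ge> 1 \<and> 1 > 2 ^ (k - 1) * w"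
    show "k = K"
    proof (rule ccontr)
      assume "k \<noteq> K"
      then consider "k < K" | "K < k" by linarith
      then show False
      proof cases
        case 1 then show False using Km h by blast
      next
        case 2
        have "(2::real) ^ K \<le> 2 ^ (k - 1)" using 2 by (intro power_increasing) auto
        hence "2 ^ K * w \<le> 2 ^ (k - 1) * w" using w by (intro mult_right_mono) auto
        then show False using h K1 by linarith
      qed
    qed
  qed
  thus ?thesis using K0 K1 K2 by blast
qed

lemma dyadic_f:
  fixes f :: real
  assumes "frac_repr nf f" "f \<noteq> 1"
  shows "\<exists>N :: int. 2 ^ nf * f = real_of_int N"
proof -
  obtain fb :: "nat \<Rightarrow> nat" where f: "f = (\<Sum>i\<in>{1..nf}. real (fb i) * 2 powr (- real i))"
    using assms unfolding frac_repr_def by blast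
  have "2 ^ nf * f = (\<Sum>i\<in>{1..nf}. real (fb i) * (2 ^ nf * 2 powr (- real i)))"
    unfolding f by (simp add: sum_distrib_left algebra_simps)
  also have "\<dots> = (\<Sum>i\<in>{1..nf}. real (fb i) * 2 ^ (nf - i))"
  proof (rule sum.cong)
    fix i assume "i \<in> {1..nf}"
    hence i: "i \<le> nf" by simp
    have "(2::real) ^ nf * 2 powr (- real i) = 2 powr (real nf - real i)"
      by (simp add: powr_diff powr_minus powr_realpow divide_simps)
    also have "\<dots> = 2 powr (real (nf - i))" using i by simp
    also have "\<dots> = 2 ^ (nf - i)" by (simp add: powr_realpow)
    finally show "real (fb i) * (2 ^ nf * 2 powr (- real i)) = real (fb i) * 2 ^ (nf - i)" by simp
  qed simp
  also have "\<dots> \<in> \<int>" by (intro Ints_sum Ints_mult Ints_power) auto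
  finally show ?thesis by (auto elim: Ints_cases)
qed




lemma INV_final:
  fixes yh :: real and l n :: nat
  assumes y: "1 \<le> yh" "yh < 4"
  shows "0 \<le> INV yh n 1 (2 * l) \<and> yh * INV yh n 1 (2 * l) \<le> 1 \<and>
         1 - yh * INV yh n 1 (2 * l) \<le> 3.5 / 2 ^ l"
proof (cases "yh = 1")
  case True then show ?thesis unfolding INV_def by simp
next
  case False
  hence y1: "1 < yh" using y by simp
  define s where "s = inv_loop yh (2 * l)"
  have I: "INV yh n 1 (2 * l) = s" unfolding INV_def s_def using False by simp
  have P: "0 \<le> s" "yh * s \<le> 1" using inv_loop_props(1,2)[OF y1 y(2)] unfolding s_def by auto
  have "1 - yh * s \<le> 3.5 / 2 ^ l"
  proof -
    consider "l \<le> 1" | "l = 2" | "3 \<le> l" by linarith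
    then show ?thesis
    proof cases
      case 1
      have "(2::real) ^ l \<le> 2 ^ 1" using 1 by (intro power_increasing) auto
      hence "1 \<le> 3.5 / (2::real) ^ l" by (simp add: divide_simps)
      thus ?thesis using P y1 by (smt (verit) mult_nonneg_nonneg)
    next
      case 2
      have "yh / 2 ^ (2 * l) \<le> 1/4" using 2 y by simp
      hence "1 - yh * s \<le> 1/2" using inv_loop_props(3)[OF y1 y(2)] unfolding s_def by blast
      thus ?thesis using 2 by simp
    next
      case 3
      have pl: "(8::real) \<le> 2 ^ l" using power_increasing[of 3 l "2::real"] 3 by simp
      have p2: "(2::real) ^ (2 * l) = 2 ^ l * 2 ^ l" by (simp add: power_add[symmetric] mult_2)
      have "(2::real) ^ 6 \<le> 2 ^ (2 * l)" using 3 by (intro power_increasing) auto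
      hence D: "yh / 2 ^ (2 * l) \<le> 1/16" using y by (simp add: divide_simps)
      have "1 - yh * s \<le> (1/2)^(2*l) + 4 * (yh / 2^(2*l))"
        using inv_loop_props(4)[OF y1 y(2) _ D] 3 unfolding s_def by simp
      also have "\<dots> = (1 + 4 * yh) / 2^(2*l)" by (simp add: power_one_over add_divide_distrib)
      also have "\<dots> \<le> 17 / 2^(2*l)" using y by (intro divide_right_mono) auto
      also have "\<dots> = (17 / 2^l) / 2^l" using p2 by simp
      also have "\<dots> \<le> 3.5 / 2^l"
      proof -
        have "17 / 2^l \<le> (3.5::real)" using pl by (simp add: divide_simps)
        thus ?thesis by (rule divide_right_mono) simp
      qed
      finally show ?thesis .
    qed
  qed
  thus ?thesis using I P by simp
qed




theorem theorem5:
  fixes n m nf l :: nat and w f :: real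
  assumes "0 \<le> w" and "w < 1" and "fixed_repr n m w"
    and "0 \<le> f" and "f \<le> 1" and "frac_repr nf f"
  shows "\<bar>FractionalPower2 w f n m nf l - w powr f\<bar> \<le> 1 / 2 powr (real l - 3)"
proof -
  have tgt: "1 / 2 powr (real l - 3) = 8 / 2 ^ l"
    by (simp add: powr_diff powr_realpow)
  define bf where "bf = max (max n nf) (max (nat \<lceil>2 * real l + 6 * real m + 2 * ln (real nf)\<rceil>) 40)"
  have pos: "0 \<le> 8 / (2::real) ^ l" by simp
  consider "w = 0" | "w \<noteq> 0" "f = 1" | "w \<noteq> 0" "f = 0" | "0 < w" "0 < f" "f < 1"
    using assms by fastforce
  then show ?thesis
  proof cases
    case 1 then show ?thesis unfolding FractionalPower2_def Let_def tgt using pos by simp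
  next
    case 2 then show ?thesis unfolding FractionalPower2_def Let_def tgt using pos assms by simp
  next
    case 3 then show ?thesis unfolding FractionalPower2_def Let_def tgt using pos assms by simp
  next
    case 4
    obtain N where N: "2 ^ nf * f = real_of_int N" using dyadic_f assms(6) 4 by blast
    obtain K where K: "(THE k :: nat. 0 < k \<and> 2 ^ k * w \<ge> 1 \<and> 1 > 2 ^ (k - 1) * w) = K"
      "0 < K" "2 ^ K * w \<ge> 1" "1 > 2 ^ (K - 1) * w" using the_k 4 assms(2) by blast
    define x where "x = 2 ^ K * w"
    define c where "c = real K * f"
    define zh where "zh = FractionalPower x f n m nf l"
    define yh where "yh = FractionalPower 2 (frac_part c) n m nf l"
    define sh where "sh = INV yh n 1 (2 * l)"
    define v where "v = 2 powr (- real_of_int \<lfloor>c\<rfloor>) * zh"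
    have E: "FractionalPower2 w f n m nf l = trunc_bits bf (v * sh)"
      unfolding FractionalPower2_def Let_def bf_def[symmetric] K(1) using 4
      unfolding x_def[symmetric] c_def[symmetric] zh_def[symmetric] yh_def[symmetric]
        sh_def[symmetric] v_def[symmetric] by simp
    have x1: "1 \<le> x" using K unfolding x_def by simp
    have x2: "x < 2"
    proof -
      have "(2::real) ^ K = 2 * 2 ^ (K - 1)" using K(2) by (cases K) auto
      hence "x = 2 * (2 ^ (K - 1) * w)" unfolding x_def by simp
      thus ?thesis using K(4) by linarith
    qed
    have c0: "0 \<le> c" unfolding c_def using 4 by simp
    define fc where "fc = frac_part c"
    have fc: "0 \<le> fc" "fc < 1" unfolding fc_def frac_part_def by linarith+
    have cfl: "c = \<lfloor>c\<rfloor> + fc" unfolding fc_def frac_part_def by simp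
    have fcN: "2 ^ nf * fc = real_of_int (int K * N - 2 ^ nf * \<lfloor>c\<rfloor>)"
    proof -
      have "2 ^ nf * fc = real K * (2 ^ nf * f) - 2 ^ nf * \<lfloor>c\<rfloor>"
        unfolding fc_def frac_part_def c_def by (simp add: algebra_simps)
      thus ?thesis using N by simp
    qed
    have Z: "1 \<le> zh \<and> \<bar>zh - x powr f\<bar> \<le> 1 / (4 * 2 ^ l)"
      unfolding zh_def using FP_props[OF x1 _ 4(2)[THEN less_imp_le] 4(3) N] x2 by simp
    have Y: "1 \<le> yh \<and> \<bar>yh - 2 powr fc\<bar> \<le> 1 / (4 * 2 ^ l)"
      unfolding yh_def fc_def[symmetric] using FP_props[of 2 fc nf "int K * N - 2 ^ nf * \<lfloor>c\<rfloor>"] fc fcN by simp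
    define X where "X = x powr f"
    define Yt where "Yt = 2 powr fc"
    have "(2::real) powr fc < 2 powr 1" using fc by (intro powr_less_mono) auto
    hence Yt: "1 \<le> Yt" "Yt < 2" unfolding Yt_def using fc by (auto simp: ge_one_powr_ge_zero)
    have X2: "X \<le> 2"
    proof -
      have "X \<le> x powr 1" unfolding X_def using x1 4 by (intro powr_mono) auto
      thus ?thesis using x2 x1 by simp
    qed
    have X0: "0 \<le> X" unfolding X_def by simp
    have l4: "1 / (4 * 2 ^ l) \<le> (1::real) / 4" by (simp add: divide_simps)
    have yh4: "yh < 4" using Y Yt unfolding Yt_def using l4 by linarith
    have S: "0 \<le> sh \<and> yh * sh \<le> 1 \<and> 1 - yh * sh \<le> 3.5 / 2 ^ l"
      unfolding sh_def using INV_final[of yh n l] Y yh4 by simp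
    have sh1: "sh \<le> 1"
    proof -
      have "1 * sh \<le> yh * sh" using Y S by (intro mult_right_mono) auto
      thus ?thesis using S by simp
    qed
    have wf: "w powr f = 2 powr (- real_of_int \<lfloor>c\<rfloor>) * (X / Yt)"
    proof -
      have w: "w = x / 2 ^ K" unfolding x_def by simp
      have "w powr f = x powr f / (2 ^ K) powr f" unfolding w using x1 by (simp add: powr_divide)
      also have "(2 ^ K :: real) powr f = 2 powr c" unfolding c_def
        by (simp add: powr_realpow[symmetric] powr_powr)
      also have "2 powr c = 2 powr real_of_int \<lfloor>c\<rfloor> * Yt" unfolding Yt_def
        by (subst cfl) (simp add: powr_add)
      finally show ?thesis unfolding X_def by (simp add: powr_minus divide_simps)
    qed
    define q where "q = 2 powr (- real_of_int \<lfloor>c\<rfloor>)"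
    have "(2::real) powr (- real_of_int \<lfloor>c\<rfloor>) \<le> 2 powr 0" using c0 by (intro powr_mono) auto
    hence q: "0 < q" "q \<le> 1" unfolding q_def by auto
    have eqd: "zh * sh - X / Yt = (zh - X) * sh + X * (sh - 1 / yh) + X * (1 / yh - 1 / Yt)"
      by (simp add: right_diff_distrib left_diff_distrib)
    have "\<bar>zh * sh - X / Yt\<bar> \<le> \<bar>(zh - X) * sh\<bar> + \<bar>X * (sh - 1 / yh)\<bar> + \<bar>X * (1 / yh - 1 / Yt)\<bar>"
      unfolding eqd using abs_triangle_ineq[of "(zh - X) * sh + X * (sh - 1 / yh)" "X * (1 / yh - 1 / Yt)"]
        abs_triangle_ineq[of "(zh - X) * sh" "X * (sh - 1 / yh)"] by linarith
    also have "\<dots> = \<bar>zh - X\<bar> * sh + X * \<bar>sh - 1 / yh\<bar> + X * \<bar>1 / yh - 1 / Yt\<bar>"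
      using S X0 by (simp add: abs_mult)
    also have "\<dots> \<le> 1 / (4 * 2 ^ l) + 2 * (3.5 / 2 ^ l) + 2 * (1 / (4 * 2 ^ l))"
    proof (intro add_mono)
      show "\<bar>zh - X\<bar> * sh \<le> 1 / (4 * 2 ^ l)"
        using mult_mono[of "\<bar>zh - X\<bar>" "1 / (4 * 2 ^ l)" sh 1] Z S sh1 unfolding X_def by simp
      have "sh - 1 / yh = - ((1 - yh * sh) / yh)" using Y by (simp add: field_simps)
      moreover have "0 \<le> (1 - yh * sh) / yh" using Y S by simp
      ultimately have "\<bar>sh - 1 / yh\<bar> = (1 - yh * sh) / yh" by (simp only: abs_minus_cancel abs_of_nonneg)
      also have "\<dots> \<le> (1 - yh * sh) / 1" using Y S by (intro divide_left_mono) auto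
      finally have "\<bar>sh - 1 / yh\<bar> \<le> 3.5 / 2 ^ l" using S by simp
      thus "X * \<bar>sh - 1 / yh\<bar> \<le> 2 * (3.5 / 2 ^ l)" using X2 X0 by (intro mult_mono) auto
      have "\<bar>1 / yh - 1 / Yt\<bar> = \<bar>Yt - yh\<bar> / (yh * Yt)" using Y Yt by (simp add: divide_simps abs_div)
      also have "\<dots> \<le> \<bar>Yt - yh\<bar> / 1" using Y Yt
        by (intro divide_left_mono) (auto simp: mult_mono[of 1 yh 1 Yt, simplified])
      finally have "\<bar>1 / yh - 1 / Yt\<bar> \<le> 1 / (4 * 2 ^ l)" using Y abs_minus_commute[of Yt yh] div_by_1[of "\<bar>Yt - yh\<bar>"] unfolding Yt_def by linarith
      thus "X * \<bar>1 / yh - 1 / Yt\<bar> \<le> 2 * (1 / (4 * 2 ^ l))" using X2 X0 by (intro mult_mono) auto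
    qed
    finally have M: "\<bar>zh * sh - X / Yt\<bar> \<le> 7.75 / 2 ^ l" by (simp add: divide_simps)
    have bf: "l + 2 \<le> bf"
    proof -
      have "real (2 * l) \<le> 2 * real l + 6 * real m + 2 * ln (real nf)"
        using ln_ge_zero[of "real nf"] by (cases "nf = 0") auto
      hence "2 * l \<le> nat \<lceil>2 * real l + 6 * real m + 2 * ln (real nf)\<rceil>" by linarith
      thus ?thesis unfolding bf_def by linarith
    qed
    have tb: "1 / 2 ^ bf \<le> (1::real) / 4 / 2 ^ l"
    proof -
      have "(2::real) ^ (l + 2) \<le> 2 ^ bf" using bf by (intro power_increasing) auto
      thus ?thesis by (simp add: divide_simps power_add)
    qed
    have vsh: "v * sh - w powr f = q * (zh * sh - X / Yt)" unfolding v_def wf q_def by (simp add: algebra_simps)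
    have "\<bar>v * sh - w powr f\<bar> \<le> 7.75 / 2 ^ l"
    proof -
      have "\<bar>v * sh - w powr f\<bar> = q * \<bar>zh * sh - X / Yt\<bar>" unfolding vsh using q by (simp add: abs_mult)
      also have "\<dots> \<le> 1 * (7.75 / 2 ^ l)" using q M by (intro mult_mono) auto
      finally show ?thesis by simp
    qed
    moreover have "\<bar>trunc_bits bf (v * sh) - v * sh\<bar> \<le> 1 / 2 ^ bf"
      using trunc_le[of bf "v * sh"] trunc_gt[of "v * sh" bf] by linarith
    ultimately have "\<bar>trunc_bits bf (v * sh) - w powr f\<bar> \<le> 7.75 / 2 ^ l + 1 / 4 / 2 ^ l"
      using tb by linarith
    also have "\<dots> = 8 / 2 ^ l" by (simp add: divide_simps)
    finally show ?thesis unfolding E tgt .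
  qed
qed


end
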